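(* Let $\lambda \in \mathbb{C}\setminus\{0\}$ and $\ast \in \{p,m\}$. The two eigenvalues (counted with multiplicity) of the transfer matrix $T_\ast = T_\ast(\lambda)$ have equal modulus if and only if \[ \lambda + \lambda^{-1} \in \mathbb{R} \quad\text{and}\quad \bigl(\lambda + \lambda^{-1} - 2 p a_\ast \cosh(2\gamma)\bigr)^2 - 4|b_\ast q|^2 \le 0 . \] Consequently, $\lambda \notin \Lambda$ if and only if these two conditions hold for at least one $\ast \in \{p,m\}$.
   Context: Fix $\gamma \in \mathbb{R}$, $p \in (-1,1)$, $q \in \mathbb{C}$ with $p^2 + |q|^2 = 1$, and for $\ast \in \{p,m\}$ fix $a_\ast \in (-1,1)$, $b_\ast \in \mathbb{C}$ with $a_\ast^2 + |b_\ast|^2 = 1$ (so $q \neq 0$, $b_\ast \neq 0$). For $\lambda \in \mathbb{C}\setminus\{0\}$ and $\ast \in \{p,m\}$ define the $2\times 2$ transfer matrix \[ T_\ast = \frac{1}{b_\ast q \lambda}\begin{pmatrix} \lambda^2 - 2 a_\ast p \cosh(2\gamma)\lambda + a_\ast^2 & -\overline{b_\ast}\,(p\lambda - a_\ast e^{2\gamma}) \\ -b_\ast\,(p\lambda - a_\ast e^{-2\gamma}) & |b_\ast|^2 \end{pmatrix}. \] Define $\Lambda$ to be the set of $\lambda \in \mathbb{C}\setminus\{0\}$ such that, for each $\ast \in \{p,m\}$, the two eigenvalues of $T_\ast$ have distinct moduli. *)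

theory Defs
  imports "HOL-Analysis.Analysis"
begin

text \<open>The transfer matrix T_* for parameters gamma, p, q and (a_*, b_*) at spectral parameter lambda.
  Row/column index 1 is the first row/column, index 2 the second.\<close>
definition transfer_matrix ::
  "real \<Rightarrow> real \<Rightarrow> complex \<Rightarrow> real \<Rightarrow> complex \<Rightarrow> complex \<Rightarrow> complex^2^2" where
  "transfer_matrix \<gamma> p q a b lam =
     (\<chi> i j. (1 / (b * q * lam)) *
        (if i = 1 then
           (if j = 1 then lam^2 - 2 * of_real a * of_real p * of_real (cosh (2*\<gamma>)) * lam + of_real a ^ 2
            else - cnj b * (of_real p * lam - of_real a * of_real (exp (2*\<gamma>))))
         else
           (if j = 1 then - b * (of_real p * lam - of_real a * of_real (exp (-2*\<gamma>)))
            else of_real ((cmod b)^2))))"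

definition eigenvalues2 :: "complex^2^2 \<Rightarrow> complex \<Rightarrow> complex \<Rightarrow> bool" where
  "eigenvalues2 M \<mu>1 \<mu>2 \<longleftrightarrow> (\<forall>z. det (mat z - M) = (z - \<mu>1) * (z - \<mu>2))"

definition eig_equal_modulus :: "complex^2^2 \<Rightarrow> bool" where
  "eig_equal_modulus M \<longleftrightarrow> (\<exists>\<mu>1 \<mu>2. eigenvalues2 M \<mu>1 \<mu>2 \<and> cmod \<mu>1 = cmod \<mu>2)"

definition eig_distinct_moduli :: "complex^2^2 \<Rightarrow> bool" where
  "eig_distinct_moduli M \<longleftrightarrow> (\<exists>\<mu>1 \<mu>2. eigenvalues2 M \<mu>1 \<mu>2 \<and> cmod \<mu>1 \<noteq> cmod \<mu>2)"

definition Lambda_set ::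
  "real \<Rightarrow> real \<Rightarrow> complex \<Rightarrow> real \<Rightarrow> complex \<Rightarrow> real \<Rightarrow> complex \<Rightarrow> complex set" where
  "Lambda_set \<gamma> p q ap bp am bm =
     {lam. lam \<noteq> 0 \<and> eig_distinct_moduli (transfer_matrix \<gamma> p q ap bp lam)
                \<and> eig_distinct_moduli (transfer_matrix \<gamma> p q am bm lam)}"

definition equal_mod_cond :: "real \<Rightarrow> real \<Rightarrow> complex \<Rightarrow> real \<Rightarrow> complex \<Rightarrow> complex \<Rightarrow> bool" where
  "equal_mod_cond \<gamma> p q a b lam \<longleftrightarrow>
     lam + inverse lam \<in> \<real> \<and>
     (Re (lam + inverse lam) - 2 * p * a * cosh (2*\<gamma>))^2 - 4 * (cmod (b * q))^2 \<le> 0"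

end

theory Submission
  imports Defs
begin

lemma coreR:
  fixes n1 n2 x :: complex and r :: real
  assumes r: "r > 0" and s: "n1 + n2 = x" and pr: "n1 * n2 = of_real (r^2)"
  shows "cmod n1 = cmod n2 \<longleftrightarrow> x \<in> \<real> \<and> (Re x)^2 \<le> 4 * r^2"
proof
  have prod: "cmod n1 * cmod n2 = r^2" using pr by (metis norm_mult norm_of_real abs_of_nonneg zero_le_power2 real_norm_def)
  assume eq: "cmod n1 = cmod n2"
  hence "cmod n1 ^2 = r^2" using prod by (simp add: power2_eq_square)
  hence n1r: "cmod n1 = r" using r by (simp add: power2_eq_iff_nonneg)
  have "n1 \<noteq> 0" using n1r r by auto
  have "n1 * cnj n1 = of_real (r^2)" using n1r by (metis complex_norm_square)
  hence "n2 = cnj n1" using pr \<open>n1 \<noteq> 0\<close> by (metis mult_left_cancel)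
  hence xx: "x = of_real (2 * Re n1)" using s by (simp add: complex_eq_iff)
  have "\<bar>Re n1\<bar> \<le> r" using abs_Re_le_cmod n1r by metis
  hence "(Re n1)^2 \<le> r^2" by (metis abs_le_square_iff abs_of_pos r)
  thus "x \<in> \<real> \<and> (Re x)^2 \<le> 4 * r^2" using xx by (simp add: power2_eq_square)
next
  have prod: "cmod n1 * cmod n2 = r^2" using pr by (metis norm_mult norm_of_real abs_of_nonneg zero_le_power2 real_norm_def)
  assume "x \<in> \<real> \<and> (Re x)^2 \<le> 4 * r^2"
  then obtain X where xX: "x = of_real X" and le: "X^2 \<le> 4*r^2" by (auto elim: Reals_cases)
  have e: "n1 * (x - n1) = of_real (r^2)" using s pr by (metis add_diff_cancel_left')
  define a where "a = Re n1"
  define b where "b = Im n1"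
  have e1: "a*X - a^2 + b^2 = r^2" using arg_cong[OF e, of Re] xX unfolding a_def b_def
    by (simp add: power2_eq_square algebra_simps)
  have e2: "b*X - 2*a*b = 0" using arg_cong[OF e, of Im] xX unfolding a_def b_def
    by (simp add: power2_eq_square algebra_simps)
  have "a^2 + b^2 = r^2"
  proof (cases "b = 0")
    case True
    hence "(2*a - X)^2 \<le> 0" using e1 le by (simp add: power2_eq_square algebra_simps)
    hence "X = 2*a" by simp
    thus ?thesis using e1 True by (simp add: power2_eq_square algebra_simps)
  next
    case False
    hence "X = 2*a" using e2 by (simp add: algebra_simps)
    thus ?thesis using e1 by (simp add: power2_eq_square algebra_simps)
  qed
  hence "cmod n1 ^2 = r^2" unfolding a_def b_def by (simp add: cmod_power2)
  hence n1r: "cmod n1 = r" using r by (simp add: power2_eq_iff_nonneg)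
  hence "cmod n2 = r" using prod r by (simp add: power2_eq_square)
  thus "cmod n1 = cmod n2" using n1r by simp
qed

lemma eig_char:
  fixes M :: "complex^2^2"
  shows "eigenvalues2 M m1 m2 \<longleftrightarrow> m1 + m2 = M$1$1 + M$2$2 \<and> m1*m2 = M$1$1*M$2$2 - M$1$2*M$2$1"
proof -
  have d: "det (mat z - M) = z^2 - (M$1$1 + M$2$2) * z + (M$1$1*M$2$2 - M$1$2*M$2$1)" for z
    by (simp add: det_2 mat_def power2_eq_square algebra_simps)
  show ?thesis
  proof
    assume "eigenvalues2 M m1 m2"
    hence h: "\<And>z. det (mat z - M) = (z - m1) * (z - m2)" by (simp add: eigenvalues2_def)
    have h0: "m1*m2 = M$1$1*M$2$2 - M$1$2*M$2$1" using h[of 0] d[of 0] by simp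
    have "1 - (M$1$1 + M$2$2) + (M$1$1*M$2$2 - M$1$2*M$2$1) = (1 - m1) * (1 - m2)" using h[of 1] d[of 1] by simp
    hence "m1 + m2 = M$1$1 + M$2$2" using h0 by (simp add: algebra_simps)
    thus "m1 + m2 = M$1$1 + M$2$2 \<and> m1*m2 = M$1$1*M$2$2 - M$1$2*M$2$1" using h0 by simp
  next
    assume "m1 + m2 = M$1$1 + M$2$2 \<and> m1*m2 = M$1$1*M$2$2 - M$1$2*M$2$1"
    hence e1: "M$1$1 + M$2$2 = m1 + m2" and e2: "M$1$1*M$2$2 - M$1$2*M$2$1 = m1 * m2" by auto
    have "det (mat z - M) = (z - m1) * (z - m2)" for z
      unfolding d[of z] e1 e2 by (simp add: power2_eq_square algebra_simps)
    thus "eigenvalues2 M m1 m2" unfolding eigenvalues2_def by blast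
  qed
qed

lemma quad_exists:
  fixes t d :: complex
  shows "\<exists>m1 m2. m1 + m2 = t \<and> m1 * m2 = d"
proof -
  define s where "s = csqrt (t^2 - 4*d)"
  have "s^2 = t^2 - 4*d" unfolding s_def by simp
  hence "((t+s)/2) * ((t-s)/2) = d" by (simp add: field_simps power2_eq_square)
  moreover have "(t+s)/2 + (t-s)/2 = t" by (simp add: field_simps)
  ultimately show ?thesis by blast
qed

lemma quad_unique:
  fixes m1 m2 n1 n2 :: complex
  assumes "m1 + m2 = n1 + n2" "m1 * m2 = n1 * n2"
  shows "(m1 = n1 \<and> m2 = n2) \<or> (m1 = n2 \<and> m2 = n1)"
proof -
  have "(m1 - n1) * (m1 - n2) = 0"
  proof -
    have "(m1 - n1) * (m1 - n2) = m1*m1 - (n1+n2)*m1 + n1*n2" by (simp add: algebra_simps)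
    also have "\<dots> = m1*m1 - (m1+m2)*m1 + m1*m2" using assms by simp
    finally show ?thesis by (simp add: algebra_simps)
  qed
  hence "m1 = n1 \<or> m1 = n2" by simp
  thus ?thesis using assms(1) by auto
qed

lemma distinct_iff:
  fixes M :: "complex^2^2"
  shows "eig_distinct_moduli M \<longleftrightarrow> \<not> eig_equal_modulus M"
proof -
  obtain m1 m2 where m: "eigenvalues2 M m1 m2"
    using quad_exists[of "M$1$1 + M$2$2" "M$1$1*M$2$2 - M$1$2*M$2$1"] eig_char by blast
  have "eigenvalues2 M n1 n2 \<Longrightarrow> (cmod n1 = cmod n2 \<longleftrightarrow> cmod m1 = cmod m2)" for n1 n2
    using quad_unique[of n1 n2 m1 m2] m eig_char[of M] by auto
  thus ?thesis unfolding eig_distinct_moduli_def eig_equal_modulus_def using m by blast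
qed

lemma pair:
  fixes \<gamma> p a :: real and q b lam :: complex
  assumes "-1 < p" "p < 1" "p^2 + (cmod q)^2 = 1"
    and "-1 < a" "a < 1" "a^2 + (cmod b)^2 = 1"
    and "lam \<noteq> 0"
  shows "eig_equal_modulus (transfer_matrix \<gamma> p q a b lam) \<longleftrightarrow> equal_mod_cond \<gamma> p q a b lam"
proof -
  define T where "T = transfer_matrix \<gamma> p q a b lam"
  define w where "w = b * q"
  define x where "x = lam + inverse lam - 2 * of_real p * of_real a * of_real (cosh (2*\<gamma>))"
  have "p^2 < 1" using assms(1,2) by (simp add: abs_square_less_1 abs_less_iff)
  hence "q \<noteq> 0" using assms(3) by auto
  have "a^2 < 1" using assms(4,5) by (simp add: abs_square_less_1 abs_less_iff)
  hence "b \<noteq> 0" using assms(6) by auto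
  have w0: "w \<noteq> 0" using \<open>q \<noteq> 0\<close> \<open>b \<noteq> 0\<close> by (simp add: w_def)
  have B: "cnj b * b = of_real ((cmod b)^2)" by (metis complex_norm_square mult.commute)
  have Q: "cnj q * q = of_real ((cmod q)^2)" by (metis complex_norm_square mult.commute)
  have ab: "of_real a ^ 2 + of_real ((cmod b)^2) = (1::complex)"
    using arg_cong[OF assms(6), of complex_of_real] by simp
  have pq: "of_real p ^ 2 + of_real ((cmod q)^2) = (1::complex)"
    using arg_cong[OF assms(3), of complex_of_real] by simp
  define E where "E = (of_real (exp (2*\<gamma>)) :: complex)"
  define E' where "E' = (of_real (exp (-2*\<gamma>)) :: complex)"
  define C where "C = (of_real (cosh (2*\<gamma>)) :: complex)"
  have EE: "E * E' = 1" unfolding E_def E'_def by (simp flip: of_real_mult exp_add)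
  have CE: "2 * C = E + E'" unfolding E_def E'_def C_def cosh_def by (simp add: field_simps)
  have tr: "T$1$1 + T$2$2 = x / w"
    unfolding T_def transfer_matrix_def x_def w_def
    using ab \<open>q \<noteq> 0\<close> \<open>b \<noteq> 0\<close> assms(7)
    by (simp add: field_simps power2_eq_square)
  define k where "k = 1 / (w * lam)"
  define Bq where "Bq = (of_real ((cmod b)^2) :: complex)"
  define Qq where "Qq = (of_real ((cmod q)^2) :: complex)"
  define P where "P = (of_real p :: complex)"
  define A where "A = (of_real a :: complex)"
  have t11: "T$1$1 = k * (lam^2 - 2 * A * P * C * lam + A^2)"
    unfolding T_def transfer_matrix_def k_def w_def A_def P_def C_def by simp
  have t22: "T$2$2 = k * Bq"
    unfolding T_def transfer_matrix_def k_def w_def Bq_def by simp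
  have t12: "T$1$2 = k * (- cnj b * (P * lam - A * E))"
    unfolding T_def transfer_matrix_def k_def w_def A_def P_def E_def by simp
  have t21: "T$2$1 = k * (- b * (P * lam - A * E'))"
    unfolding T_def transfer_matrix_def k_def w_def A_def P_def E'_def by simp
  have br: "(lam^2 - 2 * A * P * C * lam + A^2) * Bq - (cnj b * (P * lam - A * E)) * (b * (P * lam - A * E'))
      = Bq * Qq * lam^2"
  proof -
    have "(cnj b * (P * lam - A * E)) * (b * (P * lam - A * E')) = Bq * (P * lam - A * E) * (P * lam - A * E')"
    proof -
      have B': "cnj b * b = Bq" using B unfolding Bq_def by simp
      have "(cnj b * (P * lam - A * E)) * (b * (P * lam - A * E')) = (cnj b * b) * (P * lam - A * E) * (P * lam - A * E')"
        by (simp only: ac_simps)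
      thus ?thesis unfolding B' .
    qed
    also have "\<dots> = Bq * (P^2 * lam^2 - A * P * lam * (E + E') + A^2 * (E * E'))"
      by (simp add: algebra_simps power2_eq_square)
    also have "\<dots> = Bq * (P^2 * lam^2 - 2 * A * P * C * lam + A^2)"
      unfolding EE CE[symmetric] by (simp add: algebra_simps)
    finally have X: "(cnj b * (P * lam - A * E)) * (b * (P * lam - A * E')) = Bq * (P^2 * lam^2 - 2 * A * P * C * lam + A^2)" .
    have P2: "P^2 = 1 - Qq" using pq unfolding P_def Qq_def by (simp add: algebra_simps)
    show ?thesis unfolding X P2 by (simp add: algebra_simps)
  qed
  have dt: "T$1$1*T$2$2 - T$1$2*T$2$1 = cnj w / w"
  proof -
    have "T$1$1*T$2$2 - T$1$2*T$2$1 = k^2 * (Bq * Qq * lam^2)"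
      unfolding t11 t22 t12 t21 br[symmetric] by (simp add: algebra_simps power2_eq_square)
    also have "\<dots> = Bq * Qq / w^2" unfolding k_def using assms(7) w0 by (simp add: field_simps power2_eq_square)
    also have "\<dots> = (cnj b * b) * (cnj q * q) / (b * q)^2" using B Q unfolding Bq_def Qq_def w_def by simp
    also have "\<dots> = cnj w / w" unfolding w_def using \<open>b \<noteq> 0\<close> \<open>q \<noteq> 0\<close> by (simp add: field_simps power2_eq_square)
    finally show ?thesis .
  qed
  have xr: "x \<in> \<real> \<longleftrightarrow> lam + inverse lam \<in> \<real>"
  proof -
    have "x = (lam + inverse lam) - of_real (2 * p * a * cosh (2*\<gamma>))" unfolding x_def by simp
    thus ?thesis by (metis Reals_diff Reals_of_real diff_add_cancel Reals_add)
  qed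
  have xre: "Re x = Re (lam + inverse lam) - 2 * p * a * cosh (2*\<gamma>)" unfolding x_def by simp
  have cond: "equal_mod_cond \<gamma> p q a b lam \<longleftrightarrow> x \<in> \<real> \<and> (Re x)^2 \<le> 4 * (cmod w)^2"
    unfolding equal_mod_cond_def xr xre w_def by simp
  have key: "eigenvalues2 T m1 m2 \<Longrightarrow> (cmod m1 = cmod m2 \<longleftrightarrow> equal_mod_cond \<gamma> p q a b lam)" for m1 m2
  proof -
    assume "eigenvalues2 T m1 m2"
    hence s1: "m1 + m2 = x / w" and s2: "m1 * m2 = cnj w / w" using eig_char[of T] tr dt by auto
    have n1: "w * m1 + w * m2 = x" using s1 w0 by (simp add: field_simps distrib_left[symmetric])
    have n2: "(w * m1) * (w * m2) = of_real ((cmod w)^2)"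
    proof -
      have "(w * m1) * (w * m2) = w * w * (m1 * m2)" by (simp add: ac_simps)
      also have "\<dots> = w * cnj w"
      proof -
        have "w * (cnj w / w) = cnj w" using w0 by simp
        thus ?thesis unfolding s2 by (simp add: mult.assoc)
      qed
      finally show ?thesis by (metis complex_norm_square)
    qed
    have r: "cmod w > 0" using w0 by simp
    have "cmod (w * m1) = cmod (w * m2) \<longleftrightarrow> cmod m1 = cmod m2" using r by (simp add: norm_mult)
    thus ?thesis using coreR[OF r n1 n2] cond by simp
  qed
  show ?thesis unfolding T_def[symmetric] eig_equal_modulus_def
  proof
    assume "\<exists>\<mu>1 \<mu>2. eigenvalues2 T \<mu>1 \<mu>2 \<and> cmod \<mu>1 = cmod \<mu>2"
    thus "equal_mod_cond \<gamma> p q a b lam" using key by blast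
  next
    assume c: "equal_mod_cond \<gamma> p q a b lam"
    obtain m1 m2 where m: "eigenvalues2 T m1 m2"
      using quad_exists[of "T$1$1 + T$2$2" "T$1$1*T$2$2 - T$1$2*T$2$1"] eig_char by blast
    thus "\<exists>\<mu>1 \<mu>2. eigenvalues2 T \<mu>1 \<mu>2 \<and> cmod \<mu>1 = cmod \<mu>2" using key[OF m] c by blast
  qed
qed

theorem lemma2p1:
  fixes \<gamma> p ap am :: real and q bp bm lam :: complex
  assumes "-1 < p" "p < 1" "p^2 + (cmod q)^2 = 1"
    and "-1 < ap" "ap < 1" "ap^2 + (cmod bp)^2 = 1"
    and "-1 < am" "am < 1" "am^2 + (cmod bm)^2 = 1"
    and "lam \<noteq> 0"
  shows "(eig_equal_modulus (transfer_matrix \<gamma> p q ap bp lam) \<longleftrightarrow> equal_mod_cond \<gamma> p q ap bp lam)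
       \<and> (eig_equal_modulus (transfer_matrix \<gamma> p q am bm lam) \<longleftrightarrow> equal_mod_cond \<gamma> p q am bm lam)
       \<and> (lam \<notin> Lambda_set \<gamma> p q ap bp am bm \<longleftrightarrow>
            equal_mod_cond \<gamma> p q ap bp lam \<or> equal_mod_cond \<gamma> p q am bm lam)"
proof -
  have 1: "eig_equal_modulus (transfer_matrix \<gamma> p q ap bp lam) \<longleftrightarrow> equal_mod_cond \<gamma> p q ap bp lam"
    using pair[OF assms(1-6) assms(10)] .
  have 2: "eig_equal_modulus (transfer_matrix \<gamma> p q am bm lam) \<longleftrightarrow> equal_mod_cond \<gamma> p q am bm lam"
    using pair[OF assms(1-3) assms(7-9) assms(10)] .
  show ?thesis using 1 2 assms(10) unfolding Lambda_set_def distinct_iff by auto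
qed

end
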